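(* In every deterministic MDP (as in the context), the algorithm R-max returns an optimal policy. Consequently its sample complexity is at most $SAT$.
   Context: Deterministic finite-horizon MDP $\mathcal M=(\mathcal S,\mathcal A,T,s_1,f,R)$: finite state set with $S=|\mathcal S|$, actions with $A=|\mathcal A|$, start state $s_1$, transitions $s_{t+1}=f(s_t,a_t)$, rewards $R(s_t,a_t)$, steps $t\in[T]$, no discounting; a policy is optimal if it maximizes $J(\pi)=\mathbb E_\pi[\sum_{t=1}^TR(s_t,a_t)]$; each episode counts $T$ timesteps, and sample complexity is the least number of timesteps after which the output policy is optimal with probability at least $1/2$. Let $R_{\max}=\max_{(s,a)}R(s,a)$. R-max knows $\mathcal S,\mathcal A,T$ and $R_{\max}$ and has a deterministic oracle that maps any model $(\hat f,\hat R)$ (with $\hat f:\mathcal S\times\mathcal A\to\mathcal S$, $\hat R:\mathcal S\times\mathcal A\to\mathbb R$) to a deterministic time-dependent policy that is optimal for the MDP $(\mathcal S,\mathcal A,T,s_1,\hat f,\hat R)$. R-max: initialize $\hat f(s,a)=s$ and $\hat R(s,a)=R_{\max}$ for all $(s,a)$; run $SA$ episodes; at each step $t$ of each episode, in the current state $s$, take the action prescribed at $(t,s)$ by the oracle's policy for the current model $(\hat f,\hat R)$, observe the reward $r$ and next state $s'$, and set $\hat R(s,a)\gets r$, $\hat f(s,a)\gets s'$; finally return the oracle's policy for the final $(\hat f,\hat R)$. *)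

theory Defs
  imports Complex_Main
begin

text \<open>A (deterministic, time-dependent) policy is a map nat => 's => 'a, used at steps t = 1..T.\<close>

type_synonym ('s, 'a) policy = "nat \<Rightarrow> 's \<Rightarrow> 'a"

fun state_at :: "('s \<Rightarrow> 'a \<Rightarrow> 's) \<Rightarrow> 's \<Rightarrow> ('s, 'a) policy \<Rightarrow> nat \<Rightarrow> 's" where
  "state_at f s1 p 0 = s1"
| "state_at f s1 p (Suc 0) = s1"
| "state_at f s1 p (Suc (Suc t)) =
     (let s = state_at f s1 p (Suc t) in f s (p (Suc t) s))"

text \<open>Return J(p) = sum_{t=1}^T R(s_t, a_t) (deterministic, so the expectation is trivial).\<close>
definition J :: "('s \<Rightarrow> 'a \<Rightarrow> 's) \<Rightarrow> ('s \<Rightarrow> 'a \<Rightarrow> real) \<Rightarrow> 's \<Rightarrow> nat \<Rightarrow> ('s, 'a) policy \<Rightarrow> real" where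
  "J f R s1 T p = (\<Sum>t = 1..T. let s = state_at f s1 p t in R s (p t s))"

definition optimal :: "('s \<Rightarrow> 'a \<Rightarrow> 's) \<Rightarrow> ('s \<Rightarrow> 'a \<Rightarrow> real) \<Rightarrow> 's \<Rightarrow> nat \<Rightarrow> ('s, 'a) policy \<Rightarrow> bool" where
  "optimal f R s1 T p \<longleftrightarrow> (\<forall>q. J f R s1 T q \<le> J f R s1 T p)"

type_synonym ('s, 'a) planner = "('s \<Rightarrow> 'a \<Rightarrow> 's) \<Rightarrow> ('s \<Rightarrow> 'a \<Rightarrow> real) \<Rightarrow> ('s, 'a) policy"

definition planning_ok :: "('s, 'a) planner \<Rightarrow> 's \<Rightarrow> nat \<Rightarrow> bool" where
  "planning_ok P s1 T \<longleftrightarrow> (\<forall>fh Rh. optimal fh Rh s1 T (P fh Rh))"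

definition Rmax_val :: "('s::finite \<Rightarrow> 'a::finite \<Rightarrow> real) \<Rightarrow> real" where
  "Rmax_val R = Max {R s a | s a. True}"

definition rmax_step :: "('s, 'a) planner \<Rightarrow> ('s \<Rightarrow> 'a \<Rightarrow> 's) \<Rightarrow> ('s \<Rightarrow> 'a \<Rightarrow> real) \<Rightarrow> nat \<Rightarrow>
    ('s \<Rightarrow> 'a \<Rightarrow> 's) \<times> ('s \<Rightarrow> 'a \<Rightarrow> real) \<times> 's \<Rightarrow>
    ('s \<Rightarrow> 'a \<Rightarrow> 's) \<times> ('s \<Rightarrow> 'a \<Rightarrow> real) \<times> 's" where
  "rmax_step P f R t st = (case st of (fh, Rh, s) \<Rightarrow>
     (let a = P fh Rh t s; r = R s a; s' = f s a in
      (fh(s := (fh s)(a := s')), Rh(s := (Rh s)(a := r)), s')))"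

definition rmax_episode :: "('s, 'a) planner \<Rightarrow> ('s \<Rightarrow> 'a \<Rightarrow> 's) \<Rightarrow> ('s \<Rightarrow> 'a \<Rightarrow> real) \<Rightarrow> 's \<Rightarrow> nat \<Rightarrow>
    ('s \<Rightarrow> 'a \<Rightarrow> 's) \<times> ('s \<Rightarrow> 'a \<Rightarrow> real) \<Rightarrow> ('s \<Rightarrow> 'a \<Rightarrow> 's) \<times> ('s \<Rightarrow> 'a \<Rightarrow> real)" where
  "rmax_episode P f R s1 T m =
     (case fold (rmax_step P f R) [1..<Suc T] (fst m, snd m, s1) of (fh, Rh, _) \<Rightarrow> (fh, Rh))"

definition rmax_model :: "('s::finite, 'a::finite) planner \<Rightarrow> ('s \<Rightarrow> 'a \<Rightarrow> 's) \<Rightarrow> ('s \<Rightarrow> 'a \<Rightarrow> real) \<Rightarrow> 's \<Rightarrow> nat \<Rightarrow> nat \<Rightarrow>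
    ('s \<Rightarrow> 'a \<Rightarrow> 's) \<times> ('s \<Rightarrow> 'a \<Rightarrow> real)" where
  "rmax_model P f R s1 T k = (rmax_episode P f R s1 T ^^ k) (\<lambda>s a. s, \<lambda>s a. Rmax_val R)"

text \<open>Output of R-max: run S*A episodes (S*A*T timesteps), return planner policy for final model.\<close>
definition rmax :: "('s::finite, 'a::finite) planner \<Rightarrow> ('s \<Rightarrow> 'a \<Rightarrow> 's) \<Rightarrow> ('s \<Rightarrow> 'a \<Rightarrow> real) \<Rightarrow> 's \<Rightarrow> nat \<Rightarrow> ('s, 'a) policy" where
  "rmax P f R s1 T = (case rmax_model P f R s1 T (card (UNIV :: 's set) * card (UNIV :: 'a set)) of (fh, Rh) \<Rightarrow> P fh Rh)"

end

theory Submission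
  imports Defs
begin

definition wrong :: "('s \<Rightarrow> 'a \<Rightarrow> 's) \<Rightarrow> ('s \<Rightarrow> 'a \<Rightarrow> real) \<Rightarrow> ('s \<Rightarrow> 'a \<Rightarrow> 's) \<times> ('s \<Rightarrow> 'a \<Rightarrow> real) \<Rightarrow> ('s \<times> 'a) set" where
  "wrong f R m = {(s,a). fst m s a \<noteq> f s a \<or> snd m s a \<noteq> R s a}"

definition inv_m :: "('s::finite \<Rightarrow> 'a::finite \<Rightarrow> 's) \<Rightarrow> ('s \<Rightarrow> 'a \<Rightarrow> real) \<Rightarrow> ('s \<Rightarrow> 'a \<Rightarrow> 's) \<times> ('s \<Rightarrow> 'a \<Rightarrow> real) \<Rightarrow> bool" where
  "inv_m f R m = (\<forall>s a. (fst m s a = f s a \<and> snd m s a = R s a) \<or> (fst m s a = s \<and> snd m s a = Rmax_val R))"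

lemma Rmax_ge: "R s a \<le> Rmax_val (R :: 's::finite \<Rightarrow> 'a::finite \<Rightarrow> real)"
proof -
  have "{R s a |s a. True} = (\<lambda>(s,a). R s a) ` UNIV" by auto
  hence fin: "finite {R s a |s a. True}" by simp
  show ?thesis unfolding Rmax_val_def by (rule Max_ge[OF fin]) auto
qed

lemma J_exact:
  assumes "\<forall>t\<in>{1..T}. (state_at f s1 p t, p t (state_at f s1 p t)) \<notin> wrong f R (fh,Rh)"
  shows "J fh Rh s1 T p = J f R s1 T p"
proof -
  have st: "Suc n \<le> T \<Longrightarrow> state_at fh s1 p (Suc n) = state_at f s1 p (Suc n)" for n
  proof (induction n)
    case 0 then show ?case by simp
  next
    case (Suc n)
    then have IH: "state_at fh s1 p (Suc n) = state_at f s1 p (Suc n)" by simp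
    have "(state_at f s1 p (Suc n), p (Suc n) (state_at f s1 p (Suc n))) \<notin> wrong f R (fh,Rh)"
      using assms Suc.prems by auto
    then show ?case using IH by (simp add: wrong_def Let_def)
  qed
  have "\<And>t. t \<in> {1..T} \<Longrightarrow> (let s = state_at fh s1 p t in Rh s (p t s)) = (let s = state_at f s1 p t in R s (p t s))"
  proof -
    fix t assume t: "t \<in> {1..T}"
    then obtain n where n: "t = Suc n" by (cases t) auto
    have e: "state_at fh s1 p t = state_at f s1 p t" using st t n by auto
    have "(state_at f s1 p t, p t (state_at f s1 p t)) \<notin> wrong f R (fh,Rh)" using assms t by auto
    then show "(let s = state_at fh s1 p t in Rh s (p t s)) = (let s = state_at f s1 p t in R s (p t s))"
      using e by (simp add: wrong_def Let_def)
  qed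
  then show ?thesis unfolding J_def by (rule sum.cong[OF refl])
qed

lemma optimism:
  fixes f :: "'s::finite \<Rightarrow> 'a::finite \<Rightarrow> 's"
  assumes inv: "inv_m f R (fh,Rh)"
  shows "\<exists>q'. J f R s1 T q \<le> J fh Rh s1 T q'"
proof -
  define st where "st t = state_at f s1 q t" for t
  define ac where "ac t = q t (st t)" for t
  define bad where "bad t = (t \<in> {1..T} \<and> (st t, ac t) \<in> wrong f R (fh,Rh))" for t
  define \<tau> where "\<tau> = (if \<exists>t. bad t then (LEAST t. bad t) else Suc T)"
  have tb: "bad \<tau>" if "\<tau> \<le> T"
  proof (cases "\<exists>t. bad t")
    case True then show ?thesis unfolding \<tau>_def by (auto intro: LeastI)
  next
    case False then show ?thesis using that by (simp add: \<tau>_def)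
  qed
  have nb: "t < \<tau> \<Longrightarrow> \<not> bad t" for t
    unfolding \<tau>_def by (auto split: if_splits dest: not_less_Least simp: bad_def)
  have t1: "1 \<le> \<tau>"
  proof (cases "\<exists>t. bad t")
    case True then have "bad \<tau>" unfolding \<tau>_def by (auto intro: LeastI)
    then show ?thesis by (simp add: bad_def)
  qed (simp add: \<tau>_def)
  have wr: "(st \<tau>, ac \<tau>) \<in> wrong f R (fh,Rh)" if "\<tau> \<le> T" using tb[OF that] by (simp add: bad_def)
  have rt: "(st t, ac t) \<notin> wrong f R (fh,Rh)" if "t < \<tau>" "1 \<le> t" "t \<le> T" for t
    using nb[OF that(1)] that by (simp add: bad_def)
  have loop: "fh (st \<tau>) (ac \<tau>) = st \<tau> \<and> Rh (st \<tau>) (ac \<tau>) = Rmax_val R" if "\<tau> \<le> T"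
    using wr[OF that] inv unfolding inv_m_def wrong_def by fastforce
  define q' where "q' t (s::'s) = ac (min t \<tau>)" for t s
  have sst: "st (Suc (Suc n)) = f (st (Suc n)) (ac (Suc n))" for n
    by (simp add: st_def ac_def Let_def)
  have states: "Suc n \<le> T \<Longrightarrow> state_at fh s1 q' (Suc n) = st (min (Suc n) \<tau>)" for n
  proof (induction n)
    case 0 then show ?case using t1 by (simp add: st_def min_def)
  next
    case (Suc n)
    then have IH: "state_at fh s1 q' (Suc n) = st (min (Suc n) \<tau>)" by simp
    have eq: "state_at fh s1 q' (Suc (Suc n)) = fh (st (min (Suc n) \<tau>)) (ac (min (Suc n) \<tau>))"
      using IH by (simp add: Let_def q'_def)
    show ?case
    proof (cases "Suc n < \<tau>")
      case True
      then have "(st (Suc n), ac (Suc n)) \<notin> wrong f R (fh,Rh)" using rt Suc.prems by simp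
      then show ?thesis using eq True sst[of n] by (simp add: wrong_def min_def)
    next
      case False
      then have "\<tau> \<le> T" using Suc.prems by simp
      then show ?thesis using eq False loop by (simp add: min_def)
    qed
  qed
  have "\<And>t. t \<in> {1..T} \<Longrightarrow> (let s = st t in R s (q t s)) \<le> (let s = state_at fh s1 q' t in Rh s (q' t s))"
  proof -
    fix t assume t: "t \<in> {1..T}"
    then obtain n where n: "t = Suc n" by (cases t) auto
    have e: "state_at fh s1 q' t = st (min t \<tau>)" using states t n by auto
    show "(let s = st t in R s (q t s)) \<le> (let s = state_at fh s1 q' t in Rh s (q' t s))"
    proof (cases "t < \<tau>")
      case True
      then have "(st t, ac t) \<notin> wrong f R (fh,Rh)" using rt t by auto
      then show ?thesis using e True by (simp add: wrong_def q'_def ac_def min_def Let_def)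
    next
      case False
      then have "\<tau> \<le> T" using t by auto
      then show ?thesis using e False loop Rmax_ge[of R] by (simp add: q'_def ac_def min_def Let_def)
    qed
  qed
  then have "J f R s1 T q \<le> J fh Rh s1 T q'" unfolding J_def st_def by (rule sum_mono)
  then show ?thesis by blast
qed

lemma step_eq: "rmax_step P f R t (fh, Rh, c) =
   (fh(c := (fh c)(P fh Rh t c := f c (P fh Rh t c))), Rh(c := (Rh c)(P fh Rh t c := R c (P fh Rh t c))), f c (P fh Rh t c))"
  by (simp add: rmax_step_def Let_def)

lemma run:
  fixes f :: "'s::finite \<Rightarrow> 'a::finite \<Rightarrow> 's"
  assumes inv: "inv_m f R (fh,Rh)"
  shows "let st = fold (rmax_step P f R) [1..<Suc n] (fh,Rh,s1) in
    inv_m f R (fst st, fst (snd st)) \<and> wrong f R (fst st, fst (snd st)) \<subseteq> wrong f R (fh,Rh) \<and>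
    (wrong f R (fst st, fst (snd st)) = wrong f R (fh,Rh) \<longrightarrow>
      fst st = fh \<and> fst (snd st) = Rh \<and> snd (snd st) = state_at f s1 (P fh Rh) (Suc n) \<and>
      (\<forall>t\<in>{1..n}. (state_at f s1 (P fh Rh) t, P fh Rh t (state_at f s1 (P fh Rh) t)) \<notin> wrong f R (fh,Rh)))"
proof (induction n)
  case 0 then show ?case using inv by simp
next
  case (Suc n)
  obtain fh' Rh' c where stn: "fold (rmax_step P f R) [1..<Suc n] (fh,Rh,s1) = (fh', Rh', c)"
    by (cases "fold (rmax_step P f R) [1..<Suc n] (fh,Rh,s1)") auto
  define a where "a = P fh' Rh' (Suc n) c"
  have IHall: "inv_m f R (fh', Rh') \<and> wrong f R (fh', Rh') \<subseteq> wrong f R (fh,Rh) \<and>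
    (wrong f R (fh', Rh') = wrong f R (fh,Rh) \<longrightarrow>
      fh' = fh \<and> Rh' = Rh \<and> c = state_at f s1 (P fh Rh) (Suc n) \<and>
      (\<forall>t\<in>{1..n}. (state_at f s1 (P fh Rh) t, P fh Rh t (state_at f s1 (P fh Rh) t)) \<notin> wrong f R (fh,Rh)))"
    using Suc.IH stn unfolding Let_def by simp
  have IH1: "inv_m f R (fh', Rh')" using IHall by (rule conjunct1)
  have IH2: "wrong f R (fh', Rh') \<subseteq> wrong f R (fh,Rh)" using IHall by blast
  have IH3: "wrong f R (fh', Rh') = wrong f R (fh,Rh) \<Longrightarrow>
      fh' = fh \<and> Rh' = Rh \<and> c = state_at f s1 (P fh Rh) (Suc n) \<and>
      (\<forall>t\<in>{1..n}. (state_at f s1 (P fh Rh) t, P fh Rh t (state_at f s1 (P fh Rh) t)) \<notin> wrong f R (fh,Rh))"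
    using IHall by blast
  define fh2 where "fh2 = fh'(c := (fh' c)(a := f c a))"
  define Rh2 where "Rh2 = Rh'(c := (Rh' c)(a := R c a))"
  have fs: "fold (rmax_step P f R) [1..<Suc (Suc n)] (fh,Rh,s1) = (fh2, Rh2, f c a)"
    using stn by (simp add: step_eq a_def fh2_def Rh2_def)
  have ee: "fh2 x y = fh' x y \<and> Rh2 x y = Rh' x y" if "(x,y) \<noteq> (c,a)" for x y
    using that unfolding fh2_def Rh2_def by auto
  have e2: "fh2 c a = f c a" "Rh2 c a = R c a" by (simp_all add: fh2_def Rh2_def)
  have w2: "wrong f R (fh2, Rh2) = wrong f R (fh', Rh') - {(c,a)}"
  proof (rule set_eqI)
    fix p :: "'s \<times> 'a"
    obtain x y where p: "p = (x,y)" by (cases p)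
    show "p \<in> wrong f R (fh2, Rh2) \<longleftrightarrow> p \<in> wrong f R (fh', Rh') - {(c,a)}"
    proof (cases "(x,y) = (c,a)")
      case True then show ?thesis using p e2 by (simp add: wrong_def)
    next
      case False then show ?thesis using p ee[OF False] by (simp add: wrong_def)
    qed
  qed
  have i2: "inv_m f R (fh2, Rh2)"
    unfolding inv_m_def
  proof (intro allI)
    fix x y
    show "(fst (fh2, Rh2) x y = f x y \<and> snd (fh2, Rh2) x y = R x y) \<or>
          (fst (fh2, Rh2) x y = x \<and> snd (fh2, Rh2) x y = Rmax_val R)"
    proof (cases "(x,y) = (c,a)")
      case True then show ?thesis using e2 by simp
    next
      case False then show ?thesis using ee[OF False] IH1 unfolding inv_m_def by simp
    qed
  qed
  have sub: "wrong f R (fh2, Rh2) \<subseteq> wrong f R (fh,Rh)" using w2 IH2 by blast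
  have last: "fh2 = fh \<and> Rh2 = Rh \<and> f c a = state_at f s1 (P fh Rh) (Suc (Suc n)) \<and>
      (\<forall>t\<in>{1..Suc n}. (state_at f s1 (P fh Rh) t, P fh Rh t (state_at f s1 (P fh Rh) t)) \<notin> wrong f R (fh,Rh))"
    if eqw: "wrong f R (fh2, Rh2) = wrong f R (fh,Rh)"
  proof -
    have e1: "wrong f R (fh', Rh') = wrong f R (fh,Rh)" using eqw w2 IH2 by blast
    from IH3[OF e1] have h: "fh' = fh" "Rh' = Rh" "c = state_at f s1 (P fh Rh) (Suc n)"
      "\<forall>t\<in>{1..n}. (state_at f s1 (P fh Rh) t, P fh Rh t (state_at f s1 (P fh Rh) t)) \<notin> wrong f R (fh,Rh)"
      by auto
    have nc: "(c,a) \<notin> wrong f R (fh,Rh)" using eqw w2 e1 by blast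
    then have fc: "fh c a = f c a" "Rh c a = R c a" by (auto simp: wrong_def)
    have m: "fh2 = fh" "Rh2 = Rh" unfolding fh2_def Rh2_def h(1,2) fc[symmetric] by simp_all
    have sa: "f c a = state_at f s1 (P fh Rh) (Suc (Suc n))" using h by (simp add: a_def Let_def)
    have "\<forall>t\<in>{1..Suc n}. (state_at f s1 (P fh Rh) t, P fh Rh t (state_at f s1 (P fh Rh) t)) \<notin> wrong f R (fh,Rh)"
    proof
      fix t assume "t \<in> {1..Suc n}"
      then have "t \<in> {1..n} \<or> t = Suc n" by auto
      then show "(state_at f s1 (P fh Rh) t, P fh Rh t (state_at f s1 (P fh Rh) t)) \<notin> wrong f R (fh,Rh)"
      proof
        assume "t \<in> {1..n}" then show ?thesis using h(4) by blast
      next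
        assume "t = Suc n" then show ?thesis using nc h(1,2,3) by (simp add: a_def)
      qed
    qed
    then show ?thesis using m sa by blast
  qed
  show ?case unfolding Let_def fs fst_conv snd_conv using i2 sub last by blast
qed

lemma episode:
  fixes f :: "'s::finite \<Rightarrow> 'a::finite \<Rightarrow> 's"
  assumes ok: "planning_ok P s1 T" and inv: "inv_m f R m"
  shows "inv_m f R (rmax_episode P f R s1 T m) \<and> wrong f R (rmax_episode P f R s1 T m) \<subseteq> wrong f R m \<and>
    (wrong f R (rmax_episode P f R s1 T m) = wrong f R m \<longrightarrow>
      rmax_episode P f R s1 T m = m \<and> optimal f R s1 T (P (fst m) (snd m)))"
proof -
  obtain fh Rh where m: "m = (fh, Rh)" by (cases m)
  obtain fh' Rh' c where stn: "fold (rmax_step P f R) [1..<Suc T] (fh,Rh,s1) = (fh', Rh', c)"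
    by (cases "fold (rmax_step P f R) [1..<Suc T] (fh,Rh,s1)") auto
  have ep: "rmax_episode P f R s1 T m = (fh', Rh')" using stn m by (simp add: rmax_episode_def)
  have r: "inv_m f R (fh', Rh') \<and> wrong f R (fh', Rh') \<subseteq> wrong f R (fh,Rh) \<and>
    (wrong f R (fh', Rh') = wrong f R (fh,Rh) \<longrightarrow>
      fh' = fh \<and> Rh' = Rh \<and>
      (\<forall>t\<in>{1..T}. (state_at f s1 (P fh Rh) t, P fh Rh t (state_at f s1 (P fh Rh) t)) \<notin> wrong f R (fh,Rh)))"
    using run[of f R fh Rh P T s1] inv m stn by simp
  have opt: "optimal f R s1 T (P fh Rh)" if
    path: "\<forall>t\<in>{1..T}. (state_at f s1 (P fh Rh) t, P fh Rh t (state_at f s1 (P fh Rh) t)) \<notin> wrong f R (fh,Rh)"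
  proof -
    have ex: "J fh Rh s1 T (P fh Rh) = J f R s1 T (P fh Rh)" by (rule J_exact[OF path])
    have po: "optimal fh Rh s1 T (P fh Rh)" using ok by (simp add: planning_ok_def)
    show ?thesis unfolding optimal_def
    proof
      fix q
      obtain q' where "J f R s1 T q \<le> J fh Rh s1 T q'" using optimism[of f R fh Rh s1 T q] inv m by auto
      also have "\<dots> \<le> J fh Rh s1 T (P fh Rh)" using po by (simp add: optimal_def)
      finally show "J f R s1 T q \<le> J f R s1 T (P fh Rh)" using ex by simp
    qed
  qed
  show ?thesis using r ep m opt by auto
qed

theorem mainTheorem9:
  fixes f :: "'s::finite \<Rightarrow> 'a::finite \<Rightarrow> 's"
    and R :: "'s \<Rightarrow> 'a \<Rightarrow> real"
    and s1 :: 's and T :: nat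
    and P :: "('s, 'a) planner"
  assumes "planning_ok P s1 T"
  shows "optimal f R s1 T (rmax P f R s1 T)"
proof -
  define ep where "ep = rmax_episode P f R s1 T"
  define N where "N = card (UNIV :: 's set) * card (UNIV :: 'a set)"
  define m where "m k = (ep ^^ k) (\<lambda>s a. s, \<lambda>s a. Rmax_val R)" for k
  have cardU: "card (wrong f R x) \<le> N" for x
  proof -
    have "card (wrong f R x) \<le> card (UNIV :: ('s \<times> 'a) set)" by (rule card_mono) auto
    then show ?thesis by (simp add: N_def card_cartesian_product flip: UNIV_Times_UNIV)
  qed
  have claim: "inv_m f R (m k) \<and> ((ep (m k) = m k \<and> optimal f R s1 T (P (fst (m k)) (snd (m k))))
      \<or> card (wrong f R (m k)) + k \<le> N)" for k
  proof (induction k)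
    case 0
    have "inv_m f R (m 0)" by (simp add: m_def inv_m_def)
    then show ?case using cardU by simp
  next
    case (Suc k)
    have mS: "m (Suc k) = ep (m k)" by (simp add: m_def)
    have E: "inv_m f R (ep (m k)) \<and> wrong f R (ep (m k)) \<subseteq> wrong f R (m k) \<and>
      (wrong f R (ep (m k)) = wrong f R (m k) \<longrightarrow> ep (m k) = m k \<and> optimal f R s1 T (P (fst (m k)) (snd (m k))))"
      using episode[OF assms, of f R "m k"] Suc.IH by (simp add: ep_def)
    show ?case
    proof (cases "ep (m k) = m k \<and> optimal f R s1 T (P (fst (m k)) (snd (m k)))")
      case True then show ?thesis using mS E by simp
    next
      case False
      then have lt: "card (wrong f R (m k)) + k \<le> N" using Suc.IH by blast
      have "wrong f R (ep (m k)) \<noteq> wrong f R (m k)" using E False by blast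
      then have "wrong f R (ep (m k)) \<subset> wrong f R (m k)" using E by blast
      then have "card (wrong f R (ep (m k))) < card (wrong f R (m k))"
        by (rule psubset_card_mono[rotated]) simp
      then show ?thesis using mS E lt by simp
    qed
  qed
  have rm: "rmax P f R s1 T = P (fst (m N)) (snd (m N))"
    by (simp add: rmax_def rmax_model_def m_def ep_def N_def split: prod.split)
  show ?thesis
  proof (cases "card (wrong f R (m N)) + N \<le> N")
    case True
    then have "wrong f R (m N) = {}" by simp
    then have "fst (m N) = f" "snd (m N) = R" by (auto simp: wrong_def fun_eq_iff)
    then show ?thesis using rm assms by (simp add: planning_ok_def)
  next
    case False
    then show ?thesis using claim[of N] rm by auto
  qed
qed

end
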